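(* For all $n,k \in \mathbb{N}$ with $n \geq k$, the integer $k!\,c_{n,k}$ is a multiple of $q_{n,k}$ (equivalently, $c_{n,k}$ is a multiple of the rational number $q_{n,k}/k!$, i.e. $c_{n,k}k!/q_{n,k} \in \mathbb{Z}$).
   Context: For $n \in \mathbb{N}$, $E_n$ denotes the set of polynomials $P \in \mathbb{C}[X]$ of degree $\leq n$ (including the zero polynomial) such that $P(\mathbb{Z}) \subset \mathbb{Z}$. For $n,k \in \mathbb{N}$, $c_{n,k}$ is the smallest positive integer such that $c_{n,k} P^{(k)} \in E_n$ for every $P \in E_n$, where $P^{(k)}$ is the $k$-th derivative. For $n,k \in \mathbb{N}$ with $n \geq k$, $$q_{n,k} = \mathrm{lcm}\{i_1 i_2 \cdots i_k : i_1,\dots,i_k \in \mathbb{N}^*,\ i_1+\dots+i_k \leq n\},$$ with the convention $q_{n,0} = 1$; $\mathbb{N}^*$ denotes the positive integers. *)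

theory Defs
  imports Complex_Main "HOL-Computational_Algebra.Polynomial"
begin

text \<open>E_n: complex polynomials of degree at most n mapping the integers into the integers
  (the zero polynomial is included since its degree is 0).\<close>
definition E :: "nat \<Rightarrow> complex poly set" where
  "E n = {P. degree P \<le> n \<and> (\<forall>m::int. poly P (of_int m) \<in> \<int>)}"

definition c :: "nat \<Rightarrow> nat \<Rightarrow> nat" where
  "c n k = (LEAST c::nat. c > 0 \<and> (\<forall>P \<in> E n. smult (of_nat c) ((pderiv ^^ k) P) \<in> E n))"

definition q :: "nat \<Rightarrow> nat \<Rightarrow> nat" where
  "q n k = (if k = 0 then 1 else
     Lcm {prod_list xs | xs. length xs = k \<and> (\<forall>i \<in> set xs. i > 0) \<and> sum_list xs \<le> n})"

end

theory Submission
  imports Defs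
begin


definition intpoly :: "complex poly \<Rightarrow> bool" where
  "intpoly p \<longleftrightarrow> (\<forall>i. coeff p i \<in> \<int>)"

lemma intpoly_add: "intpoly p \<Longrightarrow> intpoly r \<Longrightarrow> intpoly (p + r)"
  by (auto simp: intpoly_def)

lemma intpoly_sum: "(\<And>x. x \<in> S \<Longrightarrow> intpoly (f x)) \<Longrightarrow> intpoly (sum f S)"
  by (induction S rule: infinite_finite_induct) (auto simp: intpoly_def intro!: Ints_add)

lemma intpoly_smult: "a \<in> \<int> \<Longrightarrow> intpoly p \<Longrightarrow> intpoly (smult a p)"
  by (auto simp: intpoly_def)

lemma intpoly_mult: "intpoly p \<Longrightarrow> intpoly r \<Longrightarrow> intpoly (p * r)"
  by (auto simp: intpoly_def coeff_mult intro!: Ints_sum Ints_mult)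

lemma intpoly_one: "intpoly 1"
  by (auto simp: intpoly_def coeff_1)

lemma intpoly_prod: "(\<And>x. x \<in> S \<Longrightarrow> intpoly (f x)) \<Longrightarrow> intpoly (prod f S)"
  by (induction S rule: infinite_finite_induct) (auto intro: intpoly_one intpoly_mult)

lemma intpoly_lin: "a \<in> \<int> \<Longrightarrow> b \<in> \<int> \<Longrightarrow> intpoly [:a, b:]"
  by (auto simp: intpoly_def coeff_pCons split: nat.splits)

lemma intpoly_pderiv: "intpoly p \<Longrightarrow> intpoly (pderiv p)"
  by (auto simp: intpoly_def coeff_pderiv)

lemma intpoly_pderivs: "intpoly p \<Longrightarrow> intpoly ((pderiv ^^ k) p)"
  by (induction k) (auto intro: intpoly_pderiv)

lemma intpoly_poly: "intpoly p \<Longrightarrow> x \<in> \<int> \<Longrightarrow> poly p x \<in> \<int>"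
  by (auto simp: intpoly_def poly_altdef intro!: Ints_sum Ints_mult Ints_power)

lemma degree_pderivs: "degree ((pderiv ^^ k) (p::complex poly)) \<le> degree p"
proof (induction k)
  case (Suc k)
  have "degree ((pderiv ^^ Suc k) p) = degree ((pderiv ^^ k) p) - 1"
    using degree_pderiv[of "(pderiv ^^ k) p"] by simp
  then show ?case using Suc by linarith
qed simp

lemma coeff_pderivs:
  "coeff ((pderiv ^^ k) p) j * fact j = fact (j + k) * coeff p (j + k)"
proof (induction k arbitrary: j)
  case 0 then show ?case by (simp add: mult.commute)
next
  case (Suc k)
  have "coeff ((pderiv ^^ Suc k) p) j * fact j = of_nat (Suc j) * coeff ((pderiv ^^ k) p) (Suc j) * fact j"
    by (simp add: coeff_pderiv)
  also have "\<dots> = coeff ((pderiv ^^ k) p) (Suc j) * fact (Suc j)"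
    by (simp add: algebra_simps)
  also have "\<dots> = fact (j + Suc k) * coeff p (j + Suc k)"
    using Suc[of "Suc j"] by simp
  finally show ?case .
qed

lemma poly_pderivs_0: "poly ((pderiv ^^ k) p) 0 = fact k * coeff p k"
  using coeff_pderivs[of k p 0] by (simp add: poly_0_coeff_0)

lemma smult_sum_right: "smult a (sum f S) = (\<Sum>x\<in>S. smult a (f x))"
  by (induction S rule: infinite_finite_induct) (auto simp: smult_add_right)

lemma exists_D:
  fixes n :: nat
  shows "\<exists>D::int. D \<noteq> 0 \<and> (\<forall>P::complex poly. degree P \<le> n \<and> (\<forall>m::nat. poly P (of_nat m) \<in> \<int>)
            \<longrightarrow> intpoly (smult (of_int D) P))"
proof -
  define N where "N = {0..n}"
  define w :: "nat \<Rightarrow> complex poly" where "w m = (\<Prod>j\<in>N-{m}. [:- of_nat j, 1:])" for m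
  define d :: "nat \<Rightarrow> int" where "d m = (\<Prod>j\<in>N-{m}. int m - int j)" for m
  define D where "D = (\<Prod>m\<in>N. d m)"
  have fN: "finite N" by (simp add: N_def)
  have dnz: "d m \<noteq> 0" for m unfolding d_def using fN by (auto simp: prod_zero_iff)
  have Dnz: "D \<noteq> 0" unfolding D_def using fN dnz by (auto simp: prod_zero_iff)
  have Dd: "of_int D / of_int (d m) = (of_int (\<Prod>m'\<in>N-{m}. d m') :: complex)" if "m \<in> N" for m
  proof -
    have "D = d m * (\<Prod>m'\<in>N-{m}. d m')" unfolding D_def using fN that by (simp add: prod.remove)
    then show ?thesis using dnz[of m] by (simp add: field_simps)
  qed
  have wv: "poly (w m) (of_nat i) = (if i = m then of_int (d m) else 0)" if "i \<in> N" "m \<in> N" for i m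
  proof (cases "i = m")
    case True
    then show ?thesis by (simp add: w_def d_def poly_prod)
  next
    case False
    then have "i \<in> N - {m}" using that by auto
    then show ?thesis using False fN by (auto simp: w_def poly_prod prod_zero_iff)
  qed
  have degw: "degree (w m) \<le> n" if "m \<in> N" for m
  proof -
    have "degree (w m) \<le> sum (degree \<circ> (\<lambda>j. [:- of_nat j, 1 :: complex:])) (N - {m})"
      unfolding w_def using fN by (intro degree_prod_sum_le) auto
    also have "\<dots> = card (N - {m})" by simp
    also have "\<dots> = n" using that by (simp add: N_def)
    finally show ?thesis .
  qed
  have intw: "intpoly (w m)" for m
    unfolding w_def by (intro intpoly_prod intpoly_lin) auto
  show ?thesis
  proof (intro exI[of _ D] conjI allI impI)
    show "D \<noteq> 0" by (rule Dnz)
  next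
    fix P :: "complex poly"
    assume P: "degree P \<le> n \<and> (\<forall>m::nat. poly P (of_nat m) \<in> \<int>)"
    define L where "L = (\<Sum>m\<in>N. smult (poly P (of_nat m) / of_int (d m)) (w m))"
    have Lv: "poly L (of_nat i) = poly P (of_nat i)" if "i \<in> N" for i
    proof -
      have "poly L (of_nat i) = (\<Sum>m\<in>N. poly P (of_nat m) / of_int (d m) * poly (w m) (of_nat i))"
        by (simp add: L_def poly_sum)
      also have "\<dots> = (\<Sum>m\<in>N. if m = i then poly P (of_nat i) else 0)"
        using that dnz by (intro sum.cong) (auto simp: wv)
      also have "\<dots> = poly P (of_nat i)" using that fN by simp
      finally show ?thesis .
    qed
    have degL: "degree L \<le> n"
      unfolding L_def by (intro degree_sum_le fN) (auto intro: order.trans[OF degree_smult_le] degw)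
    have cardA: "card ((of_nat :: nat \<Rightarrow> complex) ` N) = Suc n"
      by (subst card_image) (auto simp: N_def inj_on_def)
    have PL: "P = L"
      by (rule poly_eqI_degree[where A = "(of_nat :: nat \<Rightarrow> complex) ` N"])
         (use Lv cardA P degL in auto)
    have "smult (of_int D) P = smult (of_int D) L" by (simp only: PL)
    also have "\<dots> = (\<Sum>m\<in>N. smult (of_int D * (poly P (of_nat m) / of_int (d m))) (w m))"
      unfolding L_def smult_sum_right by simp
    also have "\<dots> = (\<Sum>m\<in>N. smult (poly P (of_nat m) * of_int (\<Prod>m'\<in>N-{m}. d m')) (w m))"
    proof (intro sum.cong refl)
      fix m assume m: "m \<in> N"
      have "of_int D * (poly P (of_nat m) / of_int (d m)) = poly P (of_nat m) * (of_int D / of_int (d m))"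
        by (simp only: times_divide_eq_right mult.commute)
      also have "\<dots> = poly P (of_nat m) * of_int (\<Prod>m'\<in>N-{m}. d m')" by (simp only: Dd[OF m])
      finally show "smult (of_int D * (poly P (of_nat m) / of_int (d m))) (w m) = smult (poly P (of_nat m) * of_int (\<Prod>m'\<in>N-{m}. d m')) (w m)"
        by simp
    qed
    finally have eq: "smult (of_int D) P = \<dots>" .
    show "intpoly (smult (of_int D) P)"
      unfolding eq using P by (intro intpoly_sum intpoly_smult intw Ints_mult Ints_of_int) auto
  qed
qed


definition G :: "nat \<Rightarrow> complex poly" where
  "G i = smult (1 / fact i) (\<Prod>j\<in>{1..<i}. [:- of_nat j, 1:])"

definition B :: "nat \<Rightarrow> complex poly" where
  "B i = pCons 0 (G i)"

lemma poly_B: "i > 0 \<Longrightarrow> poly (B i) x = x gchoose i"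
proof -
  assume i: "i > 0"
  have "(\<Prod>j=0..<i. x - of_nat j) = (x - of_nat 0) * (\<Prod>j=Suc 0..<i. x - of_nat j)"
    using i by (subst prod.atLeast_Suc_lessThan) auto
  then show ?thesis
    by (simp add: B_def G_def gbinomial_prod_rev poly_prod)
qed

lemma gchoose_Ints: "(of_int m :: complex) gchoose i \<in> \<int>"
proof (cases "m \<ge> 0")
  case True
  then have "(of_int m :: complex) = of_nat (nat m)" by simp
  then show ?thesis by (simp flip: binomial_gbinomial)
next
  case False
  have "(of_int m :: complex) gchoose i = (-1) ^ i * ((of_nat i - of_int m - 1) gchoose i)"
    by (rule gbinomial_negated_upper)
  also have "(of_nat i - of_int m - 1 :: complex) = of_nat (nat (int i - m - 1))"
    using False by simp
  finally show ?thesis by (simp flip: binomial_gbinomial)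
qed

lemma poly_prod_B: "(\<forall>i\<in>set xs. i > 0) \<Longrightarrow> poly (prod_list (map B xs)) (of_int m) \<in> \<int>"
  by (induction xs) (auto simp: poly_B gchoose_Ints intro!: Ints_mult)

lemma degree_G: "degree (G i) \<le> i - 1"
proof -
  have "degree (G i) \<le> degree (\<Prod>j\<in>{1..<i}. [:- of_nat j, 1 :: complex:])"
    unfolding G_def by (rule degree_smult_le)
  also have "\<dots> \<le> sum (degree \<circ> (\<lambda>j. [:- of_nat j, 1 :: complex:])) {1..<i}"
    by (intro degree_prod_sum_le) auto
  also have "\<dots> = i - 1" by simp
  finally show ?thesis .
qed

lemma degree_B: "i > 0 \<Longrightarrow> degree (B i) \<le> i"
  unfolding B_def using degree_G[of i] degree_pCons_le[of 0 "G i"] by linarith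

lemma degree_prod_B: "(\<forall>i\<in>set xs. i > 0) \<Longrightarrow> degree (prod_list (map B xs)) \<le> sum_list xs"
proof (induction xs)
  case (Cons a xs)
  have "degree (prod_list (map B (a # xs))) \<le> degree (B a) + degree (prod_list (map B xs))"
    by (simp add: degree_mult_le)
  then show ?case using Cons degree_B[of a] by simp
qed simp

lemma prod_B_monom: "prod_list (map B xs) = monom 1 (length xs) * prod_list (map G xs)"
  by (induction xs) (auto simp: B_def monom_Suc mult_ac)

lemma coeff_0_prod_list: "coeff (prod_list (ps :: complex poly list)) 0 = prod_list (map (\<lambda>p. poly p 0) ps)"
  by (induction ps) (auto simp: coeff_mult_0 poly_0_coeff_0)

lemma coeff_prod_B: "coeff (prod_list (map B xs)) (length xs) = prod_list (map (\<lambda>i. poly (G i) 0) xs)"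
  by (simp add: prod_B_monom coeff_monom_mult coeff_0_prod_list o_def)

lemma poly_G_0: "i > 0 \<Longrightarrow> poly (G i) 0 * of_nat i = (-1) ^ (i - 1)"
proof -
  assume i: "i > 0"
  have "poly (G i) 0 = (1 / fact i) * (\<Prod>j\<in>{1..<i}. - of_nat j)"
    by (simp add: G_def poly_prod)
  also have "(\<Prod>j\<in>{1..<i}. - (of_nat j :: complex)) = (-1) ^ (i - 1) * (\<Prod>j\<in>{1..<i}. of_nat j)"
    by (simp add: prod_uminus)
  also have "(\<Prod>j\<in>{1..<i}. (of_nat j :: complex)) = fact (i - 1)"
  proof -
    have "{1..<i} = {1..i-1}" using i by auto
    then show ?thesis by (simp add: fact_prod)
  qed
  finally have "poly (G i) 0 = (-1) ^ (i - 1) * fact (i - 1) / fact i" by simp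
  moreover have "(fact i :: complex) = of_nat i * fact (i - 1)"
    using i by (rule fact_reduce)
  ultimately show ?thesis using i by simp
qed

lemma prod_G_0: "(\<forall>i\<in>set xs. i > 0) \<Longrightarrow>
   prod_list (map (\<lambda>i. poly (G i) 0) xs) * of_nat (prod_list xs) = (-1) ^ sum_list (map (\<lambda>i. i - 1) xs)"
proof (induction xs)
  case (Cons a xs)
  have "prod_list (map (\<lambda>i. poly (G i) 0) (a # xs)) * of_nat (prod_list (a # xs))
      = (poly (G a) 0 * of_nat a) * (prod_list (map (\<lambda>i. poly (G i) 0) xs) * of_nat (prod_list xs))"
    by (simp add: mult_ac)
  also have "\<dots> = (-1) ^ (a - 1) * (-1) ^ sum_list (map (\<lambda>i. i - 1) xs)"
    using Cons by (simp add: poly_G_0)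
  finally show ?case by (simp add: power_add)
qed simp

lemma pderivs_smult: "(pderiv ^^ k) (smult a p) = smult a ((pderiv ^^ k) p)"
  by (induction k) (auto simp: pderiv_smult)

lemma c_exists:
  fixes n k :: nat
  shows "\<exists>c0::nat. c0 > 0 \<and> (\<forall>P \<in> E n. smult (of_nat c0) ((pderiv ^^ k) P) \<in> E n)"
proof -
  obtain D :: int where D: "D \<noteq> 0" and HD: "\<And>P::complex poly. degree P \<le> n \<Longrightarrow> (\<forall>m::nat. poly P (of_nat m) \<in> \<int>)
            \<Longrightarrow> intpoly (smult (of_int D) P)"
    using exists_D[of n] by blast
  show ?thesis
  proof (intro exI[of _ "nat \<bar>D\<bar>"] conjI ballI)
    show "nat \<bar>D\<bar> > 0" using D by simp
  next
    fix P assume P: "P \<in> E n"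
    have degP: "degree P \<le> n" using P unfolding E_def by blast
    have "\<forall>m::nat. poly P (of_nat m) \<in> \<int>"
    proof
      fix m :: nat
      have "poly P (of_int (int m)) \<in> \<int>" using P unfolding E_def by blast
      then show "poly P (of_nat m) \<in> \<int>" by simp
    qed
    then have ip: "intpoly (smult (of_int D) P)" using HD degP by blast
    have eqa: "(of_nat (nat \<bar>D\<bar>) :: complex) = of_int (sgn D) * of_int D"
    proof -
      have h1: "(of_nat (nat \<bar>D\<bar>) :: complex) = of_int \<bar>D\<bar>" by simp
      have h2: "\<bar>D\<bar> = sgn D * D" by (subst abs_sgn) (rule mult.commute)
      show ?thesis unfolding h1 by (simp only: h2 of_int_mult)
    qed
    define Q where "Q = smult (of_nat (nat \<bar>D\<bar>)) ((pderiv ^^ k) P)"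
    have "Q = (pderiv ^^ k) (smult (of_int (sgn D)) (smult (of_int D) P))"
      unfolding Q_def pderivs_smult smult_smult eqa ..
    moreover have "intpoly ((pderiv ^^ k) (smult (of_int (sgn D)) (smult (of_int D) P)))"
      by (intro intpoly_pderivs intpoly_smult ip Ints_of_int)
    ultimately have iQ: "intpoly Q" by simp
    have "degree Q \<le> degree ((pderiv ^^ k) P)" unfolding Q_def by (rule degree_smult_le)
    also have "\<dots> \<le> degree P" by (rule degree_pderivs)
    also have "\<dots> \<le> n" by (rule degP)
    finally have "degree Q \<le> n" .
    moreover have "\<forall>m::int. poly Q (of_int m) \<in> \<int>"
      using iQ intpoly_poly Ints_of_int by blast
    ultimately show "smult (of_nat (nat \<bar>D\<bar>)) ((pderiv ^^ k) P) \<in> E n"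
      unfolding E_def Q_def by blast
  qed
qed

lemma key:
  fixes n k c0 :: nat and xs :: "nat list"
  assumes c0: "\<forall>P \<in> E n. smult (of_nat c0) ((pderiv ^^ k) P) \<in> E n"
    and xs: "length xs = k" "\<forall>i\<in>set xs. i > 0" "sum_list xs \<le> n"
  shows "prod_list xs dvd fact k * c0"
proof -
  define P where "P = prod_list (map B xs)"
  have "P \<in> E n"
    unfolding E_def P_def using degree_prod_B[OF xs(2)] xs(3) poly_prod_B[OF xs(2)] by auto
  then have "smult (of_nat c0) ((pderiv ^^ k) P) \<in> E n" using c0 by blast
  then have "poly (smult (of_nat c0) ((pderiv ^^ k) P)) (of_int 0) \<in> \<int>" unfolding E_def by blast
  then have "of_nat c0 * (fact k * coeff P k) \<in> \<int>" by (simp add: poly_pderivs_0)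
  then obtain z :: int where z: "of_nat c0 * (fact k * coeff P k) = (of_int z :: complex)"
    by (elim Ints_cases) auto
  define e where "e = sum_list (map (\<lambda>i. i - 1) xs)"
  have cP: "coeff P k * of_nat (prod_list xs) = (-1) ^ e"
    unfolding P_def e_def using coeff_prod_B[of xs] prod_G_0[OF xs(2)] xs(1) by simp
  have "(of_nat (c0 * fact k) :: complex) = of_nat c0 * fact k * ((-1)^e * (-1)^e)"
    by (simp flip: power_add)
  also have "\<dots> = (of_nat c0 * (fact k * coeff P k)) * of_nat (prod_list xs) * (-1)^e"
    by (simp flip: cP add: mult_ac)
  also have "\<dots> = of_int (z * int (prod_list xs) * (-1)^e)" by (simp add: z)
  finally have "int (c0 * fact k) = z * int (prod_list xs) * (-1)^e"
    by (metis of_int_eq_iff of_int_of_nat_eq)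
  then have "int (prod_list xs) dvd int (fact k * c0)" by (simp add: mult.commute)
  then show ?thesis by (simp only: int_dvd_int_iff)
qed

theorem theorem3:
  fixes n k :: nat
  assumes "n \<ge> k"
  shows "q n k dvd fact k * c n k"
proof (cases "k = 0")
  case True
  then show ?thesis by (simp add: q_def)
next
  case False
  have "c n k > 0 \<and> (\<forall>P \<in> E n. smult (of_nat (c n k)) ((pderiv ^^ k) P) \<in> E n)"
    unfolding c_def by (rule LeastI_ex) (rule c_exists)
  then have cc: "\<forall>P \<in> E n. smult (of_nat (c n k)) ((pderiv ^^ k) P) \<in> E n" by blast
  show ?thesis
    unfolding q_def using False
  proof (simp, intro Lcm_least)
    fix b assume "b \<in> {prod_list xs |xs. length xs = k \<and> (\<forall>i\<in>set xs. 0 < i) \<and> sum_list xs \<le> n}"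
    then obtain xs where b: "b = prod_list xs" and xs: "length xs = k" "\<forall>i\<in>set xs. 0 < i" "sum_list xs \<le> n"
      by blast
    show "b dvd fact k * c n k" unfolding b by (rule key[OF cc xs])
  qed
qed

end
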